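(* Let $X_1,\ldots,X_q\in\{-1,0,1\}$ be i.i.d. random variables with mean $\mu\ne0$. Then for every $\epsilon$ with $0<\epsilon\le\frac{\min(\Pr(X_i=1),\Pr(X_i=-1))}{2|\mu|}$, $$\Pr\left(\left|\frac1{q|\mu|}\sum_{i=1}^qX_i-\frac{\mu}{|\mu|}\right|\ge\epsilon\right)\le4e^{-\frac{q\epsilon^2|\mu|^2}{12\Pr(X_i\ne0)}}.$$ *)

theory Defs
  imports "HOL-Probability.Probability"
begin

end

theory Submission imports Defs begin

lemma exp_le_quad:
  fixes x :: real assumes "\<bar>x\<bar> \<le> 1" shows "exp x \<le> 1 + x + x\<^sup>2"
proof (cases "x \<ge> 0")
  case True then show ?thesis using exp_bound[of x] assms by auto
next
  case False
  have e: "1 - x \<le> exp (-x)" using exp_ge_add_one_self[of "-x"] by simp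
  have "exp x = 1 / exp (-x)" by (simp add: exp_minus field_simps)
  also have "\<dots> \<le> 1 / (1 - x)" using e False by (intro divide_left_mono) auto
  also have "\<dots> \<le> 1 + x + x\<^sup>2"
  proof -
    have x2: "0 < x\<^sup>2" using False by simp
    have "x * x\<^sup>2 < 0" using False x2 by (simp add: mult_neg_pos)
    moreover have "(1 + x + x\<^sup>2) * (1 - x) = 1 - x * x\<^sup>2" by (simp add: algebra_simps power2_eq_square)
    ultimately have "1 \<le> (1 + x + x\<^sup>2) * (1 - x)" by linarith
    then show ?thesis using False by (simp add: divide_le_eq)
  qed
  finally show ?thesis .
qed

lemma (in prob_space) mgf_bound:
  assumes Y[measurable]: "random_variable borel Y" and vals: "\<And>x. x \<in> space M \<Longrightarrow> Y x \<in> {-1,0,1}"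
    and l: "\<bar>l\<bar> \<le> 1"
  shows "(\<integral>\<^sup>+x. ennreal (exp (l * (Y x - expectation Y))) \<partial>M) \<le> ennreal (exp (l\<^sup>2 * prob {x\<in>space M. Y x \<noteq> 0}))"
proof -
  define m where "m = expectation Y"
  define p where "p = prob {x\<in>space M. Y x \<noteq> 0}"
  have bY: "\<And>x. x \<in> space M \<Longrightarrow> norm (Y x) \<le> 1" using vals by fastforce
  have iY: "integrable M Y" by (rule integrable_const_bound[where B=1]) (use bY in auto)
  have iY2: "integrable M (\<lambda>x. (Y x)\<^sup>2)"
  proof (rule integrable_const_bound[where B=1])
    show "AE x in M. norm ((Y x)\<^sup>2) \<le> 1" by (rule AE_I2) (use vals in fastforce)
  qed simp
  have sq: "(Y x)\<^sup>2 = indicator {x\<in>space M. Y x \<noteq> 0} x" if "x \<in> space M" for x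
    using vals[OF that] that by (auto simp: indicator_def)
  have EY2: "expectation (\<lambda>x. (Y x)\<^sup>2) = p"
  proof -
    have "expectation (\<lambda>x. (Y x)\<^sup>2) = expectation (indicator {x\<in>space M. Y x \<noteq> 0})"
      by (rule Bochner_Integration.integral_cong) (auto simp: sq)
    also have "\<dots> = p" unfolding p_def by (simp add: Int_absorb2 subsetI)
    finally show ?thesis .
  qed
  define g where "g x = exp (-l*m) * (1 + l * Y x + l\<^sup>2 * (Y x)\<^sup>2)" for x
  have pw: "exp (l * (Y x - m)) \<le> g x" if "x \<in> space M" for x
  proof -
    have "\<bar>l * Y x\<bar> \<le> 1" using vals[OF that] l by auto
    then have "exp (l * Y x) \<le> 1 + l * Y x + (l * Y x)\<^sup>2" by (rule exp_le_quad)
    then have "exp (-l*m) * exp (l * Y x) \<le> g x" unfolding g_def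
      by (intro mult_left_mono) (auto simp: power_mult_distrib)
    then show ?thesis by (simp add: right_diff_distrib exp_diff exp_minus field_simps)
  qed
  have gnn: "0 \<le> g x" if "x \<in> space M" for x
    using pw[OF that] by (meson exp_ge_zero order_trans)
  have ig: "integrable M g" unfolding g_def using iY iY2 by auto
  have ri: "integral\<^sup>L M g \<le> exp (l\<^sup>2 * p)"
  proof -
    have "integral\<^sup>L M g = exp (-l*m) * (1 + l * m + l\<^sup>2 * p)"
      unfolding g_def using iY iY2 EY2 by (simp add: m_def prob_space)
    also have "\<dots> \<le> exp (-l*m) * exp (l*m + l\<^sup>2 * p)"
      by (intro mult_left_mono) (auto simp: add.assoc exp_ge_add_one_self)
    also have "\<dots> = exp (l\<^sup>2 * p)" by (simp flip: exp_add)
    finally show ?thesis .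
  qed
  have "(\<integral>\<^sup>+x. ennreal (exp (l * (Y x - m))) \<partial>M) \<le> (\<integral>\<^sup>+x. ennreal (g x) \<partial>M)"
    by (intro nn_integral_mono ennreal_leI pw)
  also have "\<dots> = ennreal (integral\<^sup>L M g)"
    by (intro nn_integral_eq_integral ig AE_I2 gnn)
  also have "\<dots> \<le> ennreal (exp (l\<^sup>2 * p))"
    by (intro ennreal_leI ri)
  finally show ?thesis by (simp add: m_def p_def)
qed

theorem lemma7:
  fixes M :: "'a measure" and X :: "nat \<Rightarrow> 'a \<Rightarrow> real" and q :: nat and \<epsilon> :: real
  assumes "prob_space M"
    and "q \<ge> 1"
    and "prob_space.indep_vars M (\<lambda>_. borel) X {1..q}"
    and "\<And>i. i \<in> {1..q} \<Longrightarrow> X i \<in> borel_measurable M"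
    and "\<And>i \<omega>. i \<in> {1..q} \<Longrightarrow> \<omega> \<in> space M \<Longrightarrow> X i \<omega> \<in> {-1, 0, 1}"
    and "\<And>i. i \<in> {1..q} \<Longrightarrow> distr M borel (X i) = distr M borel (X 1)"
    and "integral\<^sup>L M (X 1) \<noteq> 0"
    and "0 < \<epsilon>"
    and "\<epsilon> \<le> min (measure M {\<omega> \<in> space M. X 1 \<omega> = 1}) (measure M {\<omega> \<in> space M. X 1 \<omega> = -1})
              / (2 * \<bar>integral\<^sup>L M (X 1)\<bar>)"
  shows "measure M {\<omega> \<in> space M.
            \<bar>(\<Sum>i=1..q. X i \<omega>) / (real q * \<bar>integral\<^sup>L M (X 1)\<bar>)
              - integral\<^sup>L M (X 1) / \<bar>integral\<^sup>L M (X 1)\<bar>\<bar> \<ge> \<epsilon>}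
         \<le> 4 * exp (- (real q * \<epsilon>\<^sup>2 * \<bar>integral\<^sup>L M (X 1)\<bar>\<^sup>2)
                      / (12 * measure M {\<omega> \<in> space M. X 1 \<omega> \<noteq> 0}))"
proof -
  interpret P: prob_space M by fact
  define \<mu> where "\<mu> = integral\<^sup>L M (X 1)"
  define p where "p = measure M {\<omega> \<in> space M. X 1 \<omega> \<noteq> 0}"
  define I where "I = {1..q}"
  define a where "a = \<bar>\<mu>\<bar>"
  have a: "a > 0" using assms(7) by (simp add: a_def \<mu>_def)
  have fin: "finite I" and cI: "card I = q" and oneI: "1 \<in> I" using assms(2) by (auto simp: I_def)
  have rv: "\<And>i. i \<in> I \<Longrightarrow> X i \<in> borel_measurable M" using assms(4) by (simp add: I_def)
  have rv1[measurable]: "X 1 \<in> borel_measurable M" using rv oneI by blast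
  have vals: "\<And>i x. i \<in> I \<Longrightarrow> x \<in> space M \<Longrightarrow> X i x \<in> {-1,0,1}" using assms(5) by (simp add: I_def)
  have indep: "P.indep_vars (\<lambda>_. borel) X I" using assms(3) by (simp add: I_def)
  have distr: "\<And>i. i \<in> I \<Longrightarrow> distr M borel (X i) = distr M borel (X 1)" using assms(6) unfolding I_def by blast
  have p1le: "measure M {\<omega> \<in> space M. X 1 \<omega> = 1} \<le> p"
    unfolding p_def by (rule P.finite_measure_mono) (fastforce, measurable)
  have "\<epsilon> \<le> min (measure M {\<omega> \<in> space M. X 1 \<omega> = 1}) (measure M {\<omega> \<in> space M. X 1 \<omega> = -1}) / (2 * a)"
    using assms(9) by (simp add: a_def \<mu>_def)
  then have "\<epsilon> * (2 * a) \<le> min (measure M {\<omega> \<in> space M. X 1 \<omega> = 1}) (measure M {\<omega> \<in> space M. X 1 \<omega> = -1})"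
    using a by (simp add: le_divide_eq)
  then have "2 * a * \<epsilon> \<le> min (measure M {\<omega> \<in> space M. X 1 \<omega> = 1}) (measure M {\<omega> \<in> space M. X 1 \<omega> = -1})"
    by (simp add: mult.commute)
  then have ea: "2 * a * \<epsilon> \<le> p" using p1le by linarith
  have "0 < 2 * a * \<epsilon>" using a assms(8) by simp
  then have p: "p > 0" using ea by linarith
  define l where "l = \<epsilon> * a / (2 * p)"
  have l0: "l > 0" using a p assms(8) by (simp add: l_def)
  have l1: "l \<le> 1" using ea p a assms(8) by (simp add: l_def field_simps)
  define t where "t = \<epsilon> * real q * a"
  define S where "S x = (\<Sum>i\<in>I. X i x)" for x
  have Sm[measurable]: "S \<in> borel_measurable M" unfolding S_def by (intro borel_measurable_sum rv)
  have tail: "P.prob {x \<in> space M. s * (S x - q * \<mu>) \<ge> t} \<le> exp (-l*t + q * l\<^sup>2 * p)" if s: "\<bar>s\<bar> = 1" for s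
  proof -
    have ls: "\<bar>l * s\<bar> \<le> 1" using s l0 l1 by (simp add: abs_mult)
    define f where "f y = ennreal (exp ((l * s) * (y - \<mu>)))" for y
    have fm: "f \<in> borel_measurable borel" unfolding f_def by measurable
    have fX: "(\<integral>\<^sup>+x. f (X i x) \<partial>M) = (\<integral>\<^sup>+y. f y \<partial>distr M borel (X i))" if i: "i \<in> I" for i
    proof (rule nn_integral_distr[OF rv[OF i], symmetric])
      show "f \<in> borel_measurable (distr M borel (X i))"
        using fm by (subst measurable_cong_sets[OF sets_distr refl])
    qed
    have fac: "(\<integral>\<^sup>+x. ennreal (exp ((l * s) * (X i x - \<mu>))) \<partial>M) \<le> ennreal (exp (l\<^sup>2 * p))" if i: "i \<in> I" for i
    proof -
      have "(\<integral>\<^sup>+x. ennreal (exp ((l * s) * (X i x - \<mu>))) \<partial>M) = (\<integral>\<^sup>+x. f (X i x) \<partial>M)"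
        by (simp only: f_def)
      also have "\<dots> = (\<integral>\<^sup>+y. f y \<partial>distr M borel (X i))" by (rule fX[OF i])
      also have "\<dots> = (\<integral>\<^sup>+y. f y \<partial>distr M borel (X 1))" by (simp only: distr[OF i])
      also have "\<dots> = (\<integral>\<^sup>+x. f (X 1 x) \<partial>M)" by (rule fX[OF oneI, symmetric])
      also have "\<dots> = (\<integral>\<^sup>+x. ennreal (exp ((l * s) * (X 1 x - P.expectation (X 1)))) \<partial>M)"
        by (simp only: f_def \<mu>_def)
      also have "\<dots> \<le> ennreal (exp ((l * s)\<^sup>2 * P.prob {x\<in>space M. X 1 x \<noteq> 0}))"
        by (rule P.mgf_bound[OF rv1 vals[OF oneI] ls])
      also have "(l * s)\<^sup>2 * P.prob {x\<in>space M. X 1 x \<noteq> 0} = l\<^sup>2 * p"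
      proof -
        have "s\<^sup>2 = 1" using s by (metis power2_abs power_one)
        then show ?thesis by (simp add: power_mult_distrib p_def)
      qed
      finally show ?thesis .
    qed
    have "ennreal (P.prob {x \<in> space M. s * (S x - q * \<mu>) \<ge> t}) = emeasure M {x \<in> space M. s * (S x - q * \<mu>) \<ge> t}"
      by (simp add: P.emeasure_eq_measure)
    also have "\<dots> \<le> ennreal (exp (-l*t)) * (\<integral>\<^sup>+x. ennreal (exp (l * (s * (S x - q * \<mu>)))) * indicator (space M) x \<partial>M)"
      by (intro Chernoff_ineq_nn_integral_ge l0) auto
    also have "(\<integral>\<^sup>+x. ennreal (exp (l * (s * (S x - q * \<mu>)))) * indicator (space M) x \<partial>M)
             = (\<integral>\<^sup>+x. (\<Prod>i\<in>I. ennreal (exp ((l * s) * (X i x - \<mu>)))) \<partial>M)"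
    proof (rule nn_integral_cong)
      fix x assume "x \<in> space M"
      have "S x - q * \<mu> = (\<Sum>i\<in>I. (X i x - \<mu>))"
        by (simp add: S_def sum_subtractf cI)
      then have "l * (s * (S x - q * \<mu>)) = (\<Sum>i\<in>I. (l * s) * (X i x - \<mu>))"
        by (simp add: sum_distrib_left mult.assoc)
      then show "ennreal (exp (l * (s * (S x - q * \<mu>)))) * indicator (space M) x = (\<Prod>i\<in>I. ennreal (exp ((l * s) * (X i x - \<mu>))))"
        using \<open>x \<in> space M\<close> by (simp add: exp_sum fin prod_ennreal)
    qed
    also have "\<dots> = (\<Prod>i\<in>I. \<integral>\<^sup>+x. ennreal (exp ((l * s) * (X i x - \<mu>))) \<partial>M)"
      by (intro P.indep_vars_nn_integral fin P.indep_vars_compose2[OF indep]) auto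
    also have "ennreal (exp (-l*t)) * \<dots> \<le> ennreal (exp (-l*t)) * (\<Prod>i\<in>I. ennreal (exp (l\<^sup>2 * p)))"
      by (intro mult_left_mono prod_mono_ennreal fac) auto
    also have "\<dots> = ennreal (exp (-l*t) * exp (l\<^sup>2 * p) ^ q)"
      by (simp add: prod_ennreal cI ennreal_mult ennreal_power)
    also have "exp (-l*t) * exp (l\<^sup>2 * p) ^ q = exp (-l*t + q * l\<^sup>2 * p)"
      by (simp only: exp_of_nat_mult[symmetric] exp_add[symmetric]) (simp add: algebra_simps)
    finally show ?thesis by (subst (asm) ennreal_le_iff) auto
  qed
  have qa: "real q * a > 0" using a assms(2) by simp
  have sub: "{\<omega> \<in> space M. \<bar>(\<Sum>i=1..q. X i \<omega>) / (real q * \<bar>integral\<^sup>L M (X 1)\<bar>)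
              - integral\<^sup>L M (X 1) / \<bar>integral\<^sup>L M (X 1)\<bar>\<bar> \<ge> \<epsilon>}
     \<subseteq> {x \<in> space M. 1 * (S x - q * \<mu>) \<ge> t} \<union> {x \<in> space M. (-1) * (S x - q * \<mu>) \<ge> t}"
  proof safe
    fix x assume x: "x \<in> space M"
      and h: "\<epsilon> \<le> \<bar>(\<Sum>i=1..q. X i x) / (real q * \<bar>integral\<^sup>L M (X 1)\<bar>) - integral\<^sup>L M (X 1) / \<bar>integral\<^sup>L M (X 1)\<bar>\<bar>"
      and n: "\<not> - 1 * (S x - real q * \<mu>) \<ge> t"
    have "(\<Sum>i=1..q. X i x) / (real q * a) - \<mu> / a = (S x - q * \<mu>) / (real q * a)"
    proof -
      have "real q > 0" using assms(2) by simp
      then show ?thesis using a by (simp add: S_def I_def field_simps)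
    qed
    then have "\<epsilon> \<le> \<bar>S x - q * \<mu>\<bar> / (real q * a)" using h by (simp add: a_def \<mu>_def)
    then have "t \<le> \<bar>S x - q * \<mu>\<bar>" using qa by (simp add: t_def field_simps)
    then show "1 * (S x - real q * \<mu>) \<ge> t" using n by (simp add: abs_if split: if_splits)
  qed
  have "P.prob {\<omega> \<in> space M. \<bar>(\<Sum>i=1..q. X i \<omega>) / (real q * \<bar>integral\<^sup>L M (X 1)\<bar>)
              - integral\<^sup>L M (X 1) / \<bar>integral\<^sup>L M (X 1)\<bar>\<bar> \<ge> \<epsilon>}
     \<le> P.prob ({x \<in> space M. 1 * (S x - q * \<mu>) \<ge> t} \<union> {x \<in> space M. (-1) * (S x - q * \<mu>) \<ge> t})"
    by (intro P.finite_measure_mono sub) measurable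
  also have "\<dots> \<le> P.prob {x \<in> space M. 1 * (S x - q * \<mu>) \<ge> t} + P.prob {x \<in> space M. (-1) * (S x - q * \<mu>) \<ge> t}"
    by (intro measure_Un_le) measurable
  also have "\<dots> \<le> exp (-l*t + q * l\<^sup>2 * p) + exp (-l*t + q * l\<^sup>2 * p)"
    by (intro add_mono tail) auto
  also have "\<dots> \<le> 4 * exp (- (real q * \<epsilon>\<^sup>2 * \<bar>integral\<^sup>L M (X 1)\<bar>\<^sup>2) / (12 * measure M {\<omega> \<in> space M. X 1 \<omega> \<noteq> 0}))"
  proof -
    define B where "B = - (real q * \<epsilon>\<^sup>2 * a\<^sup>2) / (12 * p)"
    have e1: "-l*t + q * l\<^sup>2 * p = - (real q * \<epsilon>\<^sup>2 * a\<^sup>2) / (4 * p)"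
      using p by (simp add: l_def t_def field_simps power2_eq_square)
    have "- (real q * \<epsilon>\<^sup>2 * a\<^sup>2) / (4 * p) \<le> B"
      using p unfolding B_def by (simp add: frac_le divide_nonneg_pos)
    then have "exp (-l*t + q * l\<^sup>2 * p) \<le> exp B" using e1 by simp
    moreover have "0 < exp B" by simp
    ultimately have "exp (-l*t + q * l\<^sup>2 * p) + exp (-l*t + q * l\<^sup>2 * p) \<le> 4 * exp B" by linarith
    moreover have "B = - (real q * \<epsilon>\<^sup>2 * \<bar>integral\<^sup>L M (X 1)\<bar>\<^sup>2) / (12 * measure M {\<omega> \<in> space M. X 1 \<omega> \<noteq> 0})"
      by (simp add: B_def a_def \<mu>_def p_def)
    ultimately show ?thesis by simp
  qed
  finally show ?thesis .
qed

end
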